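(* Let $d$ be a positive square-free integer with $d\equiv 7\pmod 8$, let $K=\mathbb{Q}[\sqrt{-d}]$ with ring of integers $\mathfrak{o}_K$, and let $u=u_1+u_ii+u_jj+u_kk\in\mathcal{U}(\mathbb{H}(\mathfrak{o}_K))$. Then: (1) $u^2=2u_1u-N(u)$; (2) if $N(u)=1$, then $u$ is a torsion unit if and only if $u_1\in\{-1,0,1\}$ and the order of $u$ is $1$, $2$ or $4$; (3) if $N(u)=-1$, then $u$ has infinite order.
   Context: $\mathbb{H}(K)=\left(\frac{-1,-1}{K}\right)$ is the quaternion algebra over $K$ with $K$-basis $1,i,j,k$, $i^2=j^2=-1$, $k=ji=-ij$; $\mathbb{H}(\mathfrak{o}_K)$ is the set of $\mathfrak{o}_K$-linear combinations of $1,i,j,k$. The norm is $N(x_1+x_ii+x_jj+x_kk)=x_1^2+x_i^2+x_j^2+x_k^2$. *)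

theory Defs
  imports Complex_Main "HOL-Computational_Algebra.Polynomial" "HOL-Computational_Algebra.Squarefree"
begin

definition quadK :: "int \<Rightarrow> complex set" where
  "quadK d = {of_real (of_rat p) + of_real (of_rat q) * (\<i> * of_real (sqrt (of_int d))) | p q. True}"

definition ringOfIntegers :: "int \<Rightarrow> complex set" where
  "ringOfIntegers d = {z \<in> quadK d. algebraic_int z}"

text \<open>Quaternions x1 + xi i + xj j + xk k with complex coefficients; the quaternion algebra
  (-1,-1 / K) with i^2 = j^2 = -1, k = j i = - i j.\<close>

datatype cquat = CQ (q1: complex) (qi: complex) (qj: complex) (qk: complex)

definition qone :: cquat where "qone = CQ 1 0 0 0"

definition qscal :: "complex \<Rightarrow> cquat" where "qscal c = CQ c 0 0 0"

definition qmul :: "cquat \<Rightarrow> cquat \<Rightarrow> cquat" where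
  "qmul a b = CQ
     (q1 a * q1 b - qi a * qi b - qj a * qj b - qk a * qk b)
     (q1 a * qi b + qi a * q1 b - qj a * qk b + qk a * qj b)
     (q1 a * qj b + qj a * q1 b + qi a * qk b - qk a * qi b)
     (q1 a * qk b + qk a * q1 b - qi a * qj b + qj a * qi b)"

definition qsmul :: "complex \<Rightarrow> cquat \<Rightarrow> cquat" where
  "qsmul c a = CQ (c * q1 a) (c * qi a) (c * qj a) (c * qk a)"

definition qsub :: "cquat \<Rightarrow> cquat \<Rightarrow> cquat" where
  "qsub a b = CQ (q1 a - q1 b) (qi a - qi b) (qj a - qj b) (qk a - qk b)"

fun qpow :: "cquat \<Rightarrow> nat \<Rightarrow> cquat" where
  "qpow a 0 = qone"
| "qpow a (Suc n) = qmul a (qpow a n)"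

definition qnorm :: "cquat \<Rightarrow> complex" where
  "qnorm a = q1 a ^ 2 + qi a ^ 2 + qj a ^ 2 + qk a ^ 2"

definition quatOver :: "complex set \<Rightarrow> cquat set" where
  "quatOver R = {a. q1 a \<in> R \<and> qi a \<in> R \<and> qj a \<in> R \<and> qk a \<in> R}"

definition quatUnits :: "complex set \<Rightarrow> cquat set" where
  "quatUnits R = {u \<in> quatOver R. \<exists>v \<in> quatOver R. qmul u v = qone \<and> qmul v u = qone}"

definition qtorsion :: "cquat \<Rightarrow> bool" where
  "qtorsion u \<longleftrightarrow> (\<exists>n>0. qpow u n = qone)"

definition qhas_order :: "cquat \<Rightarrow> nat \<Rightarrow> bool" where
  "qhas_order u n \<longleftrightarrow> n > 0 \<and> qpow u n = qone \<and> (\<forall>m. 0 < m \<and> m < n \<longrightarrow> qpow u m \<noteq> qone)"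

end

theory Submission
  imports Defs
begin


lemma ev_add: "poly (map_poly (of_int :: int \<Rightarrow> complex) (p + q)) z
   = poly (map_poly of_int p) z + poly (map_poly of_int q) z"
proof -
  have "map_poly (of_int :: int \<Rightarrow> complex) (p + q) = map_poly of_int p + map_poly of_int q"
    by (rule poly_eqI) (simp add: coeff_map_poly)
  then show ?thesis by simp
qed

lemma ev_smult: "poly (map_poly (of_int :: int \<Rightarrow> complex) (smult a p)) z
   = of_int a * poly (map_poly of_int p) z"
proof -
  have "map_poly (of_int :: int \<Rightarrow> complex) (smult a p) = smult (of_int a) (map_poly of_int p)"
    by (rule poly_eqI) (simp add: coeff_map_poly)
  then show ?thesis by simp
qed

lemma ev_mult: "poly (map_poly (of_int :: int \<Rightarrow> complex) (p * q)) z
   = poly (map_poly of_int p) z * poly (map_poly of_int q) z"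
proof (induction p)
  case 0
  then show ?case by simp
next
  case (pCons a p)
  have "pCons a p * q = smult a q + pCons 0 (p * q)" by (simp add: mult_pCons_left)
  then show ?case using pCons
    by (simp add: ev_add ev_smult map_poly_pCons algebra_simps)
qed

lemma deg1_poly:
  fixes R :: "int poly"
  assumes "degree R \<le> 1"
  shows "R = pCons (coeff R 0) (pCons (coeff R 1) 0)"
proof (rule poly_eqI)
  fix n show "coeff R n = coeff (pCons (coeff R 0) (pCons (coeff R 1) 0)) n"
  proof (cases n)
    case 0 then show ?thesis by simp
  next
    case (Suc k) then show ?thesis
      using assms by (cases k) (auto simp: coeff_eq_0 coeff_pCons)
  qed
qed

lemma gauss_quad:
  fixes z :: complex and s n :: rat
  assumes ai: "algebraic_int z" and im: "Im z \<noteq> 0"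
    and eq: "z^2 - of_rat s * z + of_rat n = 0"
  shows "s \<in> \<int> \<and> n \<in> \<int>"
proof -
  obtain f where f: "poly (map_poly of_int f) z = 0" "lead_coeff f = 1"
    using ai algebraic_int_altdef_ipoly by blast
  obtain s1 s2 where sq: "quotient_of s = (s1, s2)" by (cases "quotient_of s")
  obtain n1 n2 where nq: "quotient_of n = (n1, n2)" by (cases "quotient_of n")
  have s2: "s2 > 0" and sdef: "s = of_int s1 / of_int s2"
    using sq quotient_of_denom_pos quotient_of_div by blast+
  have n2: "n2 > 0" and ndef: "n = of_int n1 / of_int n2"
    using nq quotient_of_denom_pos quotient_of_div by blast+
  define m where "m = s2 * n2"
  have m: "m > 0" using s2 n2 by (simp add: m_def)
  define G :: "int poly" where "G = [: n1 * s2, -(s1 * n2), m :]"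
  have G0: "G \<noteq> 0" using m by (simp add: G_def)
  have degG: "degree G = 2" using m by (simp add: G_def)
  have coeffG: "coeff G 0 = n1 * s2" "coeff G 1 = -(s1 * n2)" "coeff G 2 = m"
    by (simp_all add: G_def numeral_2_eq_2)
  have sC: "(of_rat s :: complex) = of_int s1 / of_int s2"
    by (simp add: sdef of_rat_divide)
  have nC: "(of_rat n :: complex) = of_int n1 / of_int n2"
    by (simp add: ndef of_rat_divide)
  have evG: "poly (map_poly of_int G) z = of_int m * (z^2 - of_rat s * z + of_rat n)"
    using s2 n2 by (simp add: G_def map_poly_pCons sC nC m_def field_simps power2_eq_square)
  then have evG0: "poly (map_poly of_int G) z = 0" using eq by simp
  define R where "R = pseudo_mod f G"
  obtain A Qp where A: "A \<noteq> 0" "smult A f = G * Qp + R"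
    using pseudo_mod(1)[OF G0, of f] R_def by blast
  have Rdeg: "R = 0 \<or> degree R < degree G" using pseudo_mod(2)[OF G0, of f] R_def by blast
  have evR: "poly (map_poly of_int R) z = 0"
  proof -
    have "poly (map_poly (of_int :: int \<Rightarrow> complex) (smult A f)) z = 0"
      by (simp add: ev_smult f)
    then have "poly (map_poly (of_int :: int \<Rightarrow> complex) (G * Qp + R)) z = 0" using A by simp
    then show ?thesis by (simp add: ev_add ev_mult evG0)
  qed
  have R0: "R = 0"
  proof -
    have "degree R \<le> 1" using Rdeg degG by auto
    then have Req: "R = pCons (coeff R 0) (pCons (coeff R 1) 0)" by (rule deg1_poly)
    have "poly (map_poly (of_int :: int \<Rightarrow> complex) (pCons (coeff R 0) (pCons (coeff R 1) 0))) z = 0"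
      using evR Req by simp
    then have e: "of_int (coeff R 0) + of_int (coeff R 1) * z = 0"
      by (simp add: map_poly_pCons mult.commute)
    then have "Im (of_int (coeff R 0) + of_int (coeff R 1) * z) = 0" by simp
    then have "coeff R 1 = 0" using im by simp
    with e have "coeff R 0 = 0" by simp
    with \<open>coeff R 1 = 0\<close> Req show ?thesis by simp
  qed
  have AfGQ: "smult A f = G * Qp" using A R0 by simp
  have f0: "f \<noteq> 0" using f by auto
  have Q0: "Qp \<noteq> 0" using AfGQ A f0 by auto
  have cf: "content f = 1"
  proof -
    have "content f dvd coeff f (degree f)" by (rule content_dvd_coeff)
    then have "is_unit (content f)" using f by simp
    then show ?thesis using is_unit_content_iff by blast
  qed
  have c1: "\<bar>A\<bar> = content G * content Qp"
    using arg_cong[OF AfGQ, of content] cf by (simp add: content_mult)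
  have l1: "A = m * lead_coeff Qp"
    using arg_cong[OF AfGQ, of lead_coeff] f coeffG degG A(1) by (simp add: lead_coeff_mult)
  have cQpos: "content Qp > 0"
  proof -
    have "\<bar>content Qp\<bar> = content Qp" using normalize_content[of Qp] by (simp del: normalize_content)
    moreover have "content Qp \<noteq> 0" using Q0 by simp
    ultimately show ?thesis by linarith
  qed
  have cGpos: "content G > 0"
  proof -
    have "\<bar>content G\<bar> = content G" using normalize_content[of G] by (simp del: normalize_content)
    moreover have "content G \<noteq> 0" using G0 by simp
    ultimately show ?thesis by linarith
  qed
  have lQ: "lead_coeff Qp \<noteq> 0" using Q0 by simp
  have "content Qp dvd lead_coeff Qp" by (rule content_dvd_coeff)
  then have cQle: "content Qp \<le> \<bar>lead_coeff Qp\<bar>"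
    using lQ cQpos dvd_imp_le_int[of "lead_coeff Qp" "content Qp"] by linarith
  have "content G * content Qp = m * \<bar>lead_coeff Qp\<bar>" using c1 l1 m by (simp add: abs_mult)
  also have "\<dots> \<ge> m * content Qp" using cQle m by simp
  finally have "content G \<ge> m" using cQpos by simp
  moreover have "content G dvd m" using content_dvd_coeff[of G 2] coeffG by simp
  then have "content G \<le> m" using m by (simp add: zdvd_imp_le)
  ultimately have cGm: "content G = m" by simp
  have d0: "m dvd n1 * s2" using content_dvd_coeff[of G 0] coeffG cGm by simp
  have d1: "m dvd s1 * n2" using content_dvd_coeff[of G 1] coeffG cGm by simp
  from d0 obtain k where k: "n1 * s2 = m * k" by blast
  from d1 obtain j where j: "s1 * n2 = m * j" by blast
  have "n = of_int k"
  proof -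
    have "of_int n1 * of_int s2 = (of_int m * of_int k :: rat)" using k by (metis of_int_mult)
    then show ?thesis using s2 n2 unfolding ndef m_def by (simp add: field_simps)
  qed
  moreover have "s = of_int j"
  proof -
    have "of_int s1 * of_int n2 = (of_int m * of_int j :: rat)" using j by (metis of_int_mult)
    then show ?thesis using s2 n2 unfolding sdef m_def by (simp add: field_simps)
  qed
  ultimately show ?thesis by simp
qed

lemma sqf_rat_int:
  fixes r :: rat and d :: int
  assumes sq: "squarefree d" and h: "r^2 * of_int d \<in> \<int>"
  shows "r \<in> \<int>"
proof -
  obtain a b where qb: "quotient_of r = (a, b)" by (cases "quotient_of r")
  have b: "b > 0" and rdef: "r = of_int a / of_int b" and cop: "coprime a b"
    using qb quotient_of_denom_pos quotient_of_div quotient_of_coprime by blast+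
  obtain k where k: "r^2 * of_int d = of_int k" using h by (auto elim: Ints_cases)
  have "(of_int a)^2 * of_int d = (of_int k * (of_int b)^2 :: rat)"
    using k b unfolding rdef by (simp add: field_simps power2_eq_square)
  then have "a^2 * d = k * b^2" by (metis of_int_eq_iff of_int_mult of_int_power)
  then have "b^2 dvd a^2 * d" by simp
  moreover have "coprime (b^2) (a^2)" using cop by (simp add: coprime_commute)
  ultimately have "b^2 dvd d" using coprime_dvd_mult_right_iff by blast
  then have "b dvd 1" using sq squarefreeD by blast
  then have "b = 1" using b by simp
  then show ?thesis using rdef by simp
qed

lemma of_real_of_rat_eq: "(of_real (of_rat r) :: complex) = of_rat r"
proof (cases r)
  case (Fract a b)
  then show ?thesis by (simp add: of_rat_rat)
qed

lemma quad_int: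
  fixes d :: int and z :: complex
  assumes d: "d > 0" and sq: "squarefree d" and z: "z \<in> ringOfIntegers d"
  shows "\<exists>P Q :: int. Re z = of_int P / 2 \<and> Im z = of_int Q * sqrt (of_int d) / 2"
proof -
  from z obtain p q :: rat where zq: "z = of_real (of_rat p) + of_real (of_rat q) * (\<i> * of_real (sqrt (of_int d)))"
    and ai: "algebraic_int z"
    unfolding ringOfIntegers_def quadK_def by blast
  have sd: "sqrt (of_int d) > 0" using d by simp
  have Rez: "Re z = of_rat p" and Imz: "Im z = of_rat q * sqrt (of_int d)"
    using zq by simp_all
  define s where "s = 2 * p"
  define n where "n = p^2 + q^2 * of_int d"
  have sn: "s \<in> \<int> \<and> n \<in> \<int>"
  proof (cases "q = 0")
    case True
    then have "z = of_rat p" using zq by (simp add: of_real_of_rat_eq)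
    then have "z \<in> \<rat>" by simp
    then have "z \<in> \<int>" using ai rational_algebraic_int_is_int by blast
    then obtain k where "z = of_int k" by (auto elim: Ints_cases)
    then have "(of_rat p :: complex) = of_rat (of_int k)" using \<open>z = of_rat p\<close> by simp
    then have "p = of_int k" using of_rat_eq_iff by blast
    then show ?thesis using True by (simp add: s_def n_def)
  next
    case False
    have im: "Im z \<noteq> 0" using False sd Imz by simp
    have "z^2 - of_rat s * z + of_rat n = 0"
    proof -
      have "(of_rat (q^2 * of_int d) :: complex) = of_real (of_rat q)^2 * of_real (sqrt (of_int d))^2"
        using d by (simp add: of_rat_mult of_rat_power flip: of_real_of_rat_eq of_real_power)
      then show ?thesis
        unfolding zq s_def n_def
        by (simp add: of_rat_add of_rat_mult of_rat_power power2_eq_square algebra_simps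
                 flip: of_real_of_rat_eq)
    qed
    then show ?thesis using gauss_quad[OF ai im] by blast
  qed
  then obtain S N where S: "s = of_int S" and N: "n = of_int N" by (auto elim!: Ints_cases)
  have "(2*q)^2 * of_int d = 4 * n - s^2"
    unfolding s_def n_def by (simp add: algebra_simps power2_eq_square)
  then have "(2*q)^2 * of_int d = of_int (4 * N - S^2)"
    using S N by simp
  then have "(2*q)^2 * of_int d \<in> \<int>" by simp
  then have "2*q \<in> \<int>" using sqf_rat_int sq by blast
  then obtain Q where Q: "2 * q = of_int Q" by (auto elim: Ints_cases)
  have "of_rat (p * 2) = (of_rat (of_int S) :: real)" using S s_def by (simp add: mult.commute)
  then have "of_rat p * 2 = (of_int S :: real)" by (simp add: of_rat_mult)
  then have "Re z = of_int S / 2" using Rez by simp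
  moreover have "Im z = of_int Q * sqrt (of_int d) / 2"
  proof -
    have "of_rat (q * 2) = (of_rat (of_int Q) :: real)" using Q by (simp add: mult.commute)
    then have "of_rat q * 2 = (of_int Q :: real)" by (simp add: of_rat_mult)
    then have "of_rat q = (of_int Q / 2 :: real)" by simp
    then show ?thesis using Imz by simp
  qed
  ultimately show ?thesis by blast
qed



lemma sq_mod8: fixes x :: int
  shows "x^2 mod 8 \<in> {0,1,4} \<and> (odd x \<longrightarrow> x^2 mod 8 = 1) \<and> (even x \<longrightarrow> x^2 mod 8 \<noteq> 1)"
proof -
  have e: "x^2 mod 8 = ((x mod 8)^2) mod 8" by (simp add: power_mod)
  have o: "even x \<longleftrightarrow> even (x mod 8)" by presburger
  have "x mod 8 \<in> {0,1,2,3,4,5,6,7}" by auto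
  then show ?thesis unfolding e using o by auto
qed


lemma mod8_3: "((X::int) mod 8 + Y mod 8 + Z mod 8) mod 8 = (X + Y + Z) mod 8"
  by (metis mod_add_eq mod_add_left_eq)

lemma three_sq_28: fixes x y z :: int
  shows "(x^2 + y^2 + z^2) mod 32 \<noteq> 28"
proof
  assume h: "(x^2 + y^2 + z^2) mod 32 = 28"
  have "((x^2 + y^2 + z^2) mod 32) mod 8 = (x^2 + y^2 + z^2) mod 8"
    by (rule mod_mod_cancel) simp
  then have "(x^2 + y^2 + z^2) mod 8 = 4" using h by simp
  then have m4: "(x^2 mod 8 + y^2 mod 8 + z^2 mod 8) mod 8 = 4" by (simp add: mod8_3)
  have ev: "even x \<and> even y \<and> even z"
    using m4 sq_mod8[of x] sq_mod8[of y] sq_mod8[of z] by auto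
  then obtain a b c where abc: "x = 2*a" "y = 2*b" "z = 2*c" by (auto elim!: evenE)
  have "(4 * (a^2 + b^2 + c^2)) mod (4 * 8) = 28" using h abc by (simp add: power_mult_distrib algebra_simps)
  then have "4 * ((a^2 + b^2 + c^2) mod 8) = 28" by (simp only: mod_mult_mult1)
  then have "(a^2 + b^2 + c^2) mod 8 = 7" by simp
  then have "(a^2 mod 8 + b^2 mod 8 + c^2 mod 8) mod 8 = 7" by (simp add: mod8_3)
  then show False using sq_mod8[of a] sq_mod8[of b] sq_mod8[of c] by auto
qed

lemma int_2adic:
  fixes d P1 P2 P3 Q1 Q2 Q3 :: int
  assumes d: "d mod 8 = 7"
    and e1: "P1^2 + P2^2 + P3^2 - d * (Q1^2 + Q2^2 + Q3^2) = -4"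
    and e2: "P1*Q1 + P2*Q2 + P3*Q3 = 0"
  shows False
proof -
  define j where "j = (d div 8) div 4"
  define r where "r = (d div 8) mod 4"
  have h1: "d = 8 * (d div 8) + 7" using d by (metis div_mult_mod_eq mult.commute)
  have h2: "d div 8 = 4 * j + r" unfolding j_def r_def by simp
  have dj: "d = 32 * j + 8 * r + 7" using h1 h2 by linarith
  have r: "r \<in> {0,1,2,3::int}" unfolding r_def by auto
  obtain t k :: int where t: "t^2 + d = 32 * k"
  proof -
    from r consider "r = 0" | "r = 1" | "r = 2" | "r = 3" by auto
    then show ?thesis
    proof cases
      case 1 then show ?thesis using that[of 5 "j+1"] dj by simp
    next
      case 2 then show ?thesis using that[of 7 "j+2"] dj by simp
    next
      case 3 then show ?thesis using that[of 3 "j+1"] dj by simp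
    next
      case 4 then show ?thesis using that[of 1 "j+1"] dj by simp
    qed
  qed
  define B where "B = Q1^2 + Q2^2 + Q3^2"
  have "(P1 + t*Q1)^2 + (P2 + t*Q2)^2 + (P3 + t*Q3)^2 = -4 + (t^2 + d) * B"
  proof -
    have "(P1 + t*Q1)^2 + (P2 + t*Q2)^2 + (P3 + t*Q3)^2
       = (P1^2 + P2^2 + P3^2) + 2*t*(P1*Q1 + P2*Q2 + P3*Q3) + t^2 * B"
      unfolding B_def by (simp add: power2_eq_square algebra_simps)
    also have "\<dots> = -4 + (t^2 + d) * B" using e1 e2 unfolding B_def by (simp add: algebra_simps)
    finally show ?thesis .
  qed
  also have "\<dots> = -4 + 32 * (k * B)" using t by simp
  finally have eq: "(P1 + t*Q1)^2 + (P2 + t*Q2)^2 + (P3 + t*Q3)^2 = -4 + 32 * (k * B)" .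
  have "\<forall>W::int. (-4 + 32 * W) mod 32 = 28" by presburger
  then have "(-4 + 32 * (k * B)) mod 32 = 28" by blast
  then show False using three_sq_28 eq by metis
qed



lemma sq_id: "qmul u u = qsub (qsmul (2 * q1 u) u) (qscal (qnorm u))"
  by (cases u) (simp add: qmul_def qsub_def qsmul_def qscal_def qnorm_def power2_eq_square algebra_simps)

fun Pseq :: "complex \<Rightarrow> complex \<Rightarrow> nat \<Rightarrow> complex" where
  "Pseq a c 0 = 0"
| "Pseq a c (Suc 0) = 1"
| "Pseq a c (Suc (Suc n)) = 2 * a * Pseq a c (Suc n) - c * Pseq a c n"

lemma pow_form:
  assumes sq: "qmul u u = qsub (qsmul (2*a) u) (qscal c)"
  shows "qpow u (Suc n) = qsub (qsmul (Pseq a c (Suc n)) u) (qscal (c * Pseq a c n))"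
proof (induction n)
  case 0
  show ?case by (cases u) (simp add: qmul_def qsub_def qsmul_def qscal_def qone_def)
next
  case (Suc n)
  have lin: "qmul u (qsub (qsmul x u) (qscal y)) = qsub (qsmul x (qmul u u)) (qsmul y u)" for x y
    by (cases u) (simp add: qmul_def qsub_def qsmul_def qscal_def algebra_simps)
  have "qpow u (Suc (Suc n)) = qmul u (qpow u (Suc n))" by simp
  also have "\<dots> = qsub (qsmul (Pseq a c (Suc n)) (qsub (qsmul (2*a) u) (qscal c))) (qsmul (c * Pseq a c n) u)"
    using Suc lin sq by simp
  also have "\<dots> = qsub (qsmul (Pseq a c (Suc (Suc n))) u) (qscal (c * Pseq a c (Suc n)))"
    by (cases u) (simp add: qsub_def qsmul_def qscal_def algebra_simps)
  finally show ?case .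
qed

lemma Pseq_closed:
  assumes "l^2 - 2*a*l + c = 0"
  shows "Pseq a c n * (l - (2*a - l)) = l^n - (2*a - l)^n"
proof -
  define mu where "mu = 2*a - l"
  have c: "c = l * mu" using assms unfolding mu_def by (simp add: algebra_simps power2_eq_square)
  have a2: "2*a = l + mu" unfolding mu_def by simp
  have "Pseq a c n * (l - mu) = l^n - mu^n \<and> Pseq a c (Suc n) * (l - mu) = l^(Suc n) - mu^(Suc n)"
  proof (induction n)
    case 0 then show ?case by simp
  next
    case (Suc n)
    then have h1: "Pseq a c n * (l - mu) = l^n - mu^n"
      and h2: "Pseq a c (Suc n) * (l - mu) = l^(Suc n) - mu^(Suc n)" by auto
    have "Pseq a c (Suc (Suc n)) * (l - mu) = 2*a * (Pseq a c (Suc n) * (l - mu)) - c * (Pseq a c n * (l - mu))"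
      by (simp add: algebra_simps)
    also have "\<dots> = (l + mu) * (l^(Suc n) - mu^(Suc n)) - l * mu * (l^n - mu^n)"
      using h1 h2 a2 c by simp
    also have "\<dots> = l^(Suc (Suc n)) - mu^(Suc (Suc n))"
      by (simp add: algebra_simps)
    finally show ?case using h2 by simp
  qed
  then show ?thesis unfolding mu_def by simp
qed

lemma Pseq_rep:
  assumes "a^2 = c"
  shows "Pseq a c (Suc n) = of_nat (Suc n) * a^n"
proof -
  have "Pseq a c (Suc n) = of_nat (Suc n) * a^n \<and> Pseq a c (Suc (Suc n)) = of_nat (Suc (Suc n)) * a^(Suc n)"
  proof (induction n)
    case 0 then show ?case by simp
  next
    case (Suc n)
    then have h1: "Pseq a c (Suc n) = of_nat (Suc n) * a^n"
      and h2: "Pseq a c (Suc (Suc n)) = of_nat (Suc (Suc n)) * a^(Suc n)" by auto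
    have "Pseq a c (Suc (Suc (Suc n))) = 2 * a * (of_nat (Suc (Suc n)) * a^(Suc n)) - a^2 * (of_nat (Suc n) * a^n)"
      using h1 h2 assms by simp
    also have "\<dots> = of_nat (Suc (Suc (Suc n))) * a^(Suc (Suc n))"
      by (simp add: algebra_simps power2_eq_square)
    finally show ?case using h2 by simp
  qed
  then show ?thesis by simp
qed



lemma tors:
  assumes sq: "qmul u u = qsub (qsmul (2*a) u) (qscal c)" and a: "a = q1 u" and c: "cmod c = 1"
    and ns: "\<not> (qi u = 0 \<and> qj u = 0 \<and> qk u = 0)" and m: "m > 0" and pm: "qpow u m = qone"
  shows "\<exists>l. cmod l = 1 \<and> 2*a = l + c * cnj l \<and> l \<noteq> a"
proof -
  obtain n where mn: "m = Suc n" using m by (cases m) auto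
  have "qpow u (Suc n) = qsub (qsmul (Pseq a c (Suc n)) u) (qscal (c * Pseq a c n))"
    using pow_form[OF sq] .
  then have "qsub (qsmul (Pseq a c (Suc n)) u) (qscal (c * Pseq a c n)) = qone" using pm mn by simp
  then have "Pseq a c (Suc n) * qi u = 0 \<and> Pseq a c (Suc n) * qj u = 0 \<and> Pseq a c (Suc n) * qk u = 0"
    by (cases u) (simp add: qsub_def qsmul_def qscal_def qone_def)
  then have P0: "Pseq a c (Suc n) = 0" using ns by auto
  define l where "l = a + csqrt (a^2 - c)"
  have leq: "l^2 - 2*a*l + c = 0"
  proof -
    have "(l - a)^2 = a^2 - c" unfolding l_def by simp
    then show ?thesis by (simp add: power2_eq_square algebra_simps)
  qed
  have la: "l \<noteq> a"
  proof
    assume "l = a"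
    then have "a^2 = c" using leq by (simp add: power2_eq_square algebra_simps)
    then have "Pseq a c (Suc n) = of_nat (Suc n) * a^n" by (rule Pseq_rep)
    moreover have "a \<noteq> 0" using \<open>a^2 = c\<close> c by auto
    ultimately show False using P0 by (simp del: of_nat_Suc)
  qed
  define mu where "mu = 2*a - l"
  have lmu: "l * mu = c" using leq unfolding mu_def by (simp add: algebra_simps power2_eq_square)
  have "Pseq a c (Suc n) * (l - mu) = l^(Suc n) - mu^(Suc n)"
    using Pseq_closed[OF leq] unfolding mu_def by blast
  then have eqp: "l^(Suc n) = mu^(Suc n)" using P0 by simp
  have "(l^(Suc n))^2 = c^(Suc n)"
  proof -
    have "(l^(Suc n))^2 = l^(Suc n) * mu^(Suc n)" using eqp by (simp add: power2_eq_square)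
    also have "\<dots> = (l * mu)^(Suc n)" by (simp add: power_mult_distrib)
    finally show ?thesis using lmu by simp
  qed
  then have "cmod l ^ (2 * Suc n) = 1" using c by (metis norm_power power_mult power_one mult.commute power_mult)
  then have "cmod l ^ (2 * Suc n) = 1 ^ (2 * Suc n)" by simp
  then have nl: "cmod l = 1"
    using power_eq_imp_eq_base[of "cmod l" "2 * Suc n" 1] by simp
  have lc: "l * cnj l = 1"
    using nl complex_norm_square[of l] by simp
  have "mu = c * cnj l"
  proof -
    have "mu = mu * (l * cnj l)" using lc by simp
    also have "\<dots> = (l * mu) * cnj l" by (simp add: algebra_simps)
    finally show ?thesis using lmu by simp
  qed
  then have "2*a = l + c * cnj l" unfolding mu_def by (simp add: algebra_simps)
  then show ?thesis using nl la by blast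
qed



lemma zero_in_R: "0 \<in> ringOfIntegers d"
proof -
  have "(0::complex) = of_real (of_rat 0) + of_real (of_rat 0) * (\<i> * of_real (sqrt (of_int d)))" by simp
  then have "(0::complex) \<in> quadK d" unfolding quadK_def by blast
  then show ?thesis unfolding ringOfIntegers_def by simp
qed

lemma no_three_sq:
  assumes d: "d > 0" and sq: "squarefree d" and d8: "d mod 8 = 7"
    and b: "b \<in> ringOfIntegers d" and e: "e \<in> ringOfIntegers d" and f: "f \<in> ringOfIntegers d"
    and s: "b^2 + e^2 + f^2 = -1"
  shows False
proof -
  obtain P1 Q1 where 1: "Re b = of_int P1 / 2" "Im b = of_int Q1 * sqrt (of_int d) / 2"
    using quad_int[OF d sq b] by blast
  obtain P2 Q2 where 2: "Re e = of_int P2 / 2" "Im e = of_int Q2 * sqrt (of_int d) / 2"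
    using quad_int[OF d sq e] by blast
  obtain P3 Q3 where 3: "Re f = of_int P3 / 2" "Im f = of_int Q3 * sqrt (of_int d) / 2"
    using quad_int[OF d sq f] by blast
  define r where "r = sqrt (of_int d)"
  have r2: "r^2 = of_int d" unfolding r_def using d by simp
  have rpos: "r > 0" unfolding r_def using d by simp
  have re: "Re (b^2 + e^2 + f^2) = -1" and im: "Im (b^2 + e^2 + f^2) = 0" using s by simp_all
  have "Re (b^2 + e^2 + f^2) = (of_int P1^2 + of_int P2^2 + of_int P3^2 - (of_int Q1^2 + of_int Q2^2 + of_int Q3^2) * r^2) / 4"
    unfolding Re_power2 plus_complex.sel 1 2 3 r_def[symmetric] by (simp add: power2_eq_square field_simps)
  then have "of_int P1^2 + of_int P2^2 + of_int P3^2 - (of_int Q1^2 + of_int Q2^2 + of_int Q3^2) * of_int d = (-4::real)"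
    using re r2 by simp
  then have e1: "P1^2 + P2^2 + P3^2 - d * (Q1^2 + Q2^2 + Q3^2) = -4"
  proof -
    have "(of_int (P1^2 + P2^2 + P3^2 - d * (Q1^2 + Q2^2 + Q3^2)) :: real) = of_int (-4)"
      using \<open>of_int P1^2 + of_int P2^2 + of_int P3^2 - (of_int Q1^2 + of_int Q2^2 + of_int Q3^2) * of_int d = (-4::real)\<close>
      by (simp add: algebra_simps)
    then show ?thesis by (simp only: of_int_eq_iff)
  qed
  have imeq: "Im (b^2 + e^2 + f^2) = (of_int P1 * of_int Q1 + of_int P2 * of_int Q2 + of_int P3 * of_int Q3) * r / 2"
    unfolding Im_power2 plus_complex.sel 1 2 3 r_def[symmetric] by (simp add: field_simps)
  then have "(of_int P1 * of_int Q1 + of_int P2 * of_int Q2 + of_int P3 * of_int Q3) * r / 2 = (0::real)"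
    using im by (metis imeq)
  then have "(of_int (P1 * Q1 + P2 * Q2 + P3 * Q3) :: real) = 0" using rpos by simp
  then have e2: "P1 * Q1 + P2 * Q2 + P3 * Q3 = 0" by (simp only: of_int_eq_0_iff)
  show False using int_2adic[OF d8 e1 e2] .
qed



theorem mainTheorem14:
  fixes d :: int and u :: cquat
  assumes "d > 0" and "squarefree d" and "d mod 8 = 7"
    and "u \<in> quatUnits (ringOfIntegers d)"
  shows "qmul u u = qsub (qsmul (2 * q1 u) u) (qscal (qnorm u))
         \<and> (qnorm u = 1 \<longrightarrow>
              (qtorsion u \<longleftrightarrow>
                 (q1 u \<in> {-1, 0, 1} \<and> (qhas_order u 1 \<or> qhas_order u 2 \<or> qhas_order u 4))))
         \<and> (qnorm u = -1 \<longrightarrow> \<not> qtorsion u)"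
proof -
  note d = assms(1) and sqf = assms(2) and d8 = assms(3)
  have d7: "d \<ge> 7" using d d8 by presburger
  have R: "q1 u \<in> ringOfIntegers d" "qi u \<in> ringOfIntegers d" "qj u \<in> ringOfIntegers d" "qk u \<in> ringOfIntegers d"
    using assms(4) unfolding quatUnits_def quatOver_def by auto
  define a where "a = q1 u"
  have sq: "qmul u u = qsub (qsmul (2 * q1 u) u) (qscal (qnorm u))" by (rule sq_id)
  have P2: "qnorm u = 1 \<longrightarrow>
              (qtorsion u \<longleftrightarrow>
                 (q1 u \<in> {-1, 0, 1} \<and> (qhas_order u 1 \<or> qhas_order u 2 \<or> qhas_order u 4)))"
  proof
    assume N: "qnorm u = 1"
    show "qtorsion u \<longleftrightarrow>
                 (q1 u \<in> {-1, 0, 1} \<and> (qhas_order u 1 \<or> qhas_order u 2 \<or> qhas_order u 4))"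
    proof
      assume "q1 u \<in> {-1, 0, 1} \<and> (qhas_order u 1 \<or> qhas_order u 2 \<or> qhas_order u 4)"
      then show "qtorsion u" unfolding qhas_order_def qtorsion_def by blast
    next
      assume "qtorsion u"
      then obtain m where m: "m > 0" "qpow u m = qone" unfolding qtorsion_def by blast
      show "q1 u \<in> {-1, 0, 1} \<and> (qhas_order u 1 \<or> qhas_order u 2 \<or> qhas_order u 4)"
      proof (cases "qi u = 0 \<and> qj u = 0 \<and> qk u = 0")
        case True
        then have ueq: "u = CQ a 0 0 0" unfolding a_def by (cases u) simp
        have "a^2 = 1" using N ueq by (simp add: qnorm_def)
        then have "a = 1 \<or> a = -1" by (simp add: power2_eq_1_iff)
        then show ?thesis
        proof
          assume "a = 1"
          then have "u = qone" using ueq by (simp add: qone_def)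
          then have "qhas_order u 1" unfolding qhas_order_def
            by (auto simp: qmul_def qone_def)
          then show ?thesis using \<open>a = 1\<close> a_def by simp
        next
          assume "a = -1"
          then have "qhas_order u 2" unfolding qhas_order_def using ueq
            by (auto simp: qmul_def qone_def numeral_2_eq_2 less_Suc_eq)
          then show ?thesis using \<open>a = -1\<close> a_def by simp
        qed
      next
        case False
        have sq1: "qmul u u = qsub (qsmul (2*a) u) (qscal 1)" using sq N a_def by simp
        obtain l where l: "cmod l = 1" "2*a = l + 1 * cnj l" "l \<noteq> a"
          using tors[OF sq1 a_def _ False m] by auto
        have "2*a = of_real (2 * Re l)" using l(2) complex_add_cnj by simp
        then have aRe: "a = of_real (Re l)" by (metis mult_2 of_real_add add_cancel_right_left field_sum_of_halves mult_cancel_left zero_neq_numeral)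
        obtain P Q where PQ: "Re a = of_int P / 2" "Im a = of_int Q * sqrt (of_int d) / 2"
          using quad_int[OF d sqf R(1)] a_def by blast
        have "Im a = 0" using aRe by simp
        then have "a = of_int P / 2" using PQ(1) by (simp add: complex_eq_iff)
        moreover have "(of_int P / 2 :: complex) \<in> \<rat>" by (intro Rats_divide) auto
        ultimately have "a \<in> \<rat>" by metis
        moreover have "algebraic_int a" using R(1) a_def unfolding ringOfIntegers_def by simp
        ultimately have "a \<in> \<int>" using rational_algebraic_int_is_int by blast
        then obtain k where k: "a = of_int k" by (auto elim: Ints_cases)
        have "\<bar>Re l\<bar> \<le> 1" using abs_Re_le_cmod[of l] l(1) by simp
        have Rel: "Re l = of_int k" using aRe k by (metis Re_complex_of_real complex_Re_of_int)
        have "\<bar>real_of_int k\<bar> \<le> 1" using Rel \<open>\<bar>Re l\<bar> \<le> 1\<close> by simp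
        then have "\<bar>k\<bar> \<le> 1" by (metis of_int_abs of_int_le_1_iff)
        moreover have "k \<noteq> 1 \<and> k \<noteq> -1"
        proof
          have "Re l ^ 2 + Im l ^ 2 = 1" using l(1) by (simp add: cmod_def)
          show "k \<noteq> 1"
          proof
            assume "k = 1"
            then have "Re l = 1" using Rel by simp
            then have "Im l = 0" using \<open>Re l ^ 2 + Im l ^ 2 = 1\<close> by simp
            then have "l = a" using \<open>Re l = 1\<close> k \<open>k = 1\<close> by (simp add: complex_eq_iff)
            then show False using l(3) by simp
          qed
          show "k \<noteq> -1"
          proof
            assume "k = -1"
            then have "Re l = -1" using Rel by simp
            then have "Im l = 0" using \<open>Re l ^ 2 + Im l ^ 2 = 1\<close> by simp
            then have "l = a" using \<open>Re l = -1\<close> k \<open>k = -1\<close> by (simp add: complex_eq_iff)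
            then show False using l(3) by simp
          qed
        qed
        ultimately have "k = 0" by auto
        then have a0: "a = 0" using k by simp
        have sq0: "qmul u u = qsub (qsmul (2*0) u) (qscal 1)" using sq1 a0 by simp
        have pf: "qpow u (Suc n) = qsub (qsmul (Pseq 0 1 (Suc n)) u) (qscal (1 * Pseq 0 1 n))" for n
          using pow_form[OF sq0] .
        have p1: "qpow u 1 = u" using pf[of 0]
          by (cases u) (simp add: qsub_def qsmul_def qscal_def)
        have p2: "qpow u 2 = CQ (-1) 0 0 0" using pf[of 1]
          by (cases u) (simp add: qsub_def qsmul_def qscal_def numeral_2_eq_2)
        have p3: "qpow u 3 = qsmul (-1) u" using pf[of 2]
          by (cases u) (simp add: qsub_def qsmul_def qscal_def numeral_eq_Suc)
        have p4: "qpow u 4 = qone" using pf[of 3]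
          by (cases u) (simp add: qsub_def qsmul_def qscal_def qone_def numeral_eq_Suc)
        have "u \<noteq> qone" using False by (auto simp: qone_def)
        moreover have "qsmul (-1) u \<noteq> qone" using False by (auto simp: qone_def qsmul_def)
        moreover have "CQ (-1) 0 0 0 \<noteq> qone" by (simp add: qone_def)
        ultimately have "qhas_order u 4" unfolding qhas_order_def
          using p1 p2 p3 p4 by (auto simp: less_Suc_eq numeral_eq_Suc)
        then show ?thesis using a0 a_def by simp
      qed
    qed
  qed
  have P3: "qnorm u = -1 \<longrightarrow> \<not> qtorsion u"
  proof (intro impI notI)
    assume N: "qnorm u = -1" and "qtorsion u"
    then obtain m where m: "m > 0" "qpow u m = qone" unfolding qtorsion_def by blast
    show False
    proof (cases "qi u = 0 \<and> qj u = 0 \<and> qk u = 0")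
      case True
      then have "a^2 + 0^2 + 0^2 = -1" using N unfolding a_def qnorm_def by simp
      then show False using no_three_sq[OF d sqf d8 R(1)[folded a_def] zero_in_R zero_in_R] by blast
    next
      case False
      have sq1: "qmul u u = qsub (qsmul (2*a) u) (qscal (-1))" using sq N a_def by simp
      obtain l where l: "cmod l = 1" "2*a = l + (-1) * cnj l" "l \<noteq> a"
        using tors[OF sq1 a_def _ False m] by auto
      have "2*a = of_real (2 * Im l) * \<i>" using l(2) complex_diff_cnj[of l] by simp
      then have "Re a = 0" and imA: "Im a = Im l" by (simp_all add: complex_eq_iff)
      have "\<bar>Im l\<bar> \<le> 1" using abs_Im_le_cmod[of l] l(1) by simp
      obtain P Q where PQ: "Re a = of_int P / 2" "Im a = of_int Q * sqrt (of_int d) / 2"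
        using quad_int[OF d sqf R(1)] a_def by blast
      have "Q = 0"
      proof (rule ccontr)
        assume "Q \<noteq> 0"
        then have "\<bar>of_int Q\<bar> \<ge> (1::real)" by linarith
        moreover have "sqrt (of_int d) \<ge> sqrt 7" using d7 by simp
        moreover have "sqrt 7 > (2::real)"
          by (rule real_less_rsqrt) simp
        moreover have "1 * sqrt (of_int d) \<le> \<bar>of_int Q\<bar> * sqrt (of_int d)"
          using \<open>\<bar>of_int Q\<bar> \<ge> (1::real)\<close> d by (intro mult_right_mono) auto
        ultimately have "\<bar>of_int Q\<bar> * sqrt (of_int d) > 2" by linarith
        then have "\<bar>Im a\<bar> > 1" using PQ by (simp add: abs_mult)
        then show False using imA \<open>\<bar>Im l\<bar> \<le> 1\<close> by simp
      qed
      then have a0: "a = 0" using PQ \<open>Re a = 0\<close> by (simp add: complex_eq_iff)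
      then have "qi u ^ 2 + qj u ^ 2 + qk u ^ 2 = -1" using N unfolding a_def qnorm_def by simp
      then show False using no_three_sq[OF d sqf d8 R(2) R(3) R(4)] by blast
    qed
  qed
  show ?thesis using sq P2 P3 by blast
qed

end
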